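(* Let $F$ be a Banach lattice and $\tau$ a uniformly exhaustive linear topology on $F$ weaker than the norm topology. (i) If $E\subset F$ is a closed subspace on which $\tau$ agrees with the norm topology, then $E$ is $n$-dispersed for some $n\in\mathbb{N}$. (ii) If a bounded operator $T:F\to H$ into a Banach space complements $\tau$, then $T$ is $n$-DNS for some $n\in\mathbb{N}$.
   Context: $\tau$ is uniformly exhaustive if for every $\tau$-neighborhood $U$ of $0$ there is $n$ such that there is no pairwise disjoint ($|f|\wedge|g|=0$) $n$-tuple of elements all outside $U$. $T$ complements $\tau$ if no net $(f_p)$ in the unit sphere $\mathrm{S}_F$ is $\tau$-null with $\|Tf_p\|\to0$. For $n\ge2$, $T$ is $n$-DNS if there is $r>0$ such that no pairwise disjoint $f_1,\dots,f_n\in\mathrm{S}_F$ satisfy $\|Tf_k\|\le r$ for all $k$; $E$ is $n$-dispersed if there is $r>0$ such that no pairwise disjoint $f_1,\dots,f_n\in\mathrm{S}_F$ satisfy $d(f_k,E)<r$ for all $k$. *)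

theory Defs
  imports "HOL-Analysis.Analysis"
begin

class banach_lattice = banach + ordered_real_vector + lattice +
  assumes lattice_norm_mono:
    "sup x (- x) \<le> sup y (- y) \<Longrightarrow> norm x \<le> norm y"

definition labs :: "'a::banach_lattice \<Rightarrow> 'a" where
  "labs x = sup x (- x)"

definition ldisjoint :: "'a::banach_lattice \<Rightarrow> 'a \<Rightarrow> bool" where
  "ldisjoint f g \<longleftrightarrow> inf (labs f) (labs g) = 0"

definition pw_disjoint :: "nat \<Rightarrow> (nat \<Rightarrow> 'a::banach_lattice) \<Rightarrow> bool" where
  "pw_disjoint n f \<longleftrightarrow> (\<forall>i<n. \<forall>j<n. i \<noteq> j \<longrightarrow> ldisjoint (f i) (f j))"

definition linear_topology :: "'a::real_normed_vector topology \<Rightarrow> bool" where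
  "linear_topology \<tau> \<longleftrightarrow> topspace \<tau> = UNIV \<and>
     continuous_map (prod_topology \<tau> \<tau>) \<tau> (\<lambda>(x, y). x + y) \<and>
     continuous_map (prod_topology euclideanreal \<tau>) \<tau> (\<lambda>(c, x). c *\<^sub>R x)"

definition weaker_than_norm :: "'a::real_normed_vector topology \<Rightarrow> bool" where
  "weaker_than_norm \<tau> \<longleftrightarrow> (\<forall>U. openin \<tau> U \<longrightarrow> open U)"

definition nhd0 :: "'a::real_normed_vector topology \<Rightarrow> 'a set \<Rightarrow> bool" where
  "nhd0 \<tau> U \<longleftrightarrow> (\<exists>V. openin \<tau> V \<and> 0 \<in> V \<and> V \<subseteq> U)"

definition uniformly_exhaustive :: "'a::banach_lattice topology \<Rightarrow> bool" where
  "uniformly_exhaustive \<tau> \<longleftrightarrow>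
     (\<forall>U. nhd0 \<tau> U \<longrightarrow>
        (\<exists>n::nat. \<not> (\<exists>f. pw_disjoint n f \<and> (\<forall>k<n. f k \<notin> U))))"

text \<open>T complements \<tau>: no net in the unit sphere which is \<tau>-null and along which
  norm (T f) tends to 0.  Nets are represented by proper filters
  (index type 'a suffices, by passing to the image filter).\<close>
definition complements ::
    "('a::banach_lattice \<Rightarrow> 'b::real_normed_vector) \<Rightarrow> 'a topology \<Rightarrow> bool" where
  "complements T \<tau> \<longleftrightarrow>
     \<not> (\<exists>(F::'a filter) (f::'a \<Rightarrow> 'a). F \<noteq> bot \<and> (\<forall>p. norm (f p) = 1) \<and>
           limitin \<tau> f 0 F \<and> ((\<lambda>p. norm (T (f p))) \<longlongrightarrow> 0) F)"

definition n_DNS :: "nat \<Rightarrow> ('a::banach_lattice \<Rightarrow> 'b::real_normed_vector) \<Rightarrow> bool" where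
  "n_DNS n T \<longleftrightarrow> (\<exists>r>0. \<not> (\<exists>f. pw_disjoint n f \<and>
       (\<forall>k<n. norm (f k) = 1 \<and> norm (T (f k)) \<le> r)))"

definition n_dispersed :: "nat \<Rightarrow> 'a::banach_lattice set \<Rightarrow> bool" where
  "n_dispersed n E \<longleftrightarrow> (\<exists>r>0. \<not> (\<exists>f. pw_disjoint n f \<and>
       (\<forall>k<n. norm (f k) = 1 \<and> infdist (f k) E < r)))"

end

theory Submission
  imports Defs
begin

lemma pw_disjoint_mono: "pw_disjoint m f \<Longrightarrow> n \<le> m \<Longrightarrow> pw_disjoint n f"
  unfolding pw_disjoint_def by auto

lemma ue_get:
  assumes "uniformly_exhaustive \<tau>" "openin \<tau> U" "0 \<in> U"
  shows "\<exists>n\<ge>2. \<not> (\<exists>f. pw_disjoint n f \<and> (\<forall>k<n. f k \<notin> U))"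
proof -
  have "nhd0 \<tau> U" using assms unfolding nhd0_def by blast
  then obtain n where n: "\<not> (\<exists>f. pw_disjoint n f \<and> (\<forall>k<n. f k \<notin> U))"
    using assms(1) unfolding uniformly_exhaustive_def by blast
  show ?thesis
  proof (intro exI[of _ "max n 2"] conjI)
    show "\<not> (\<exists>f. pw_disjoint (max n 2) f \<and> (\<forall>k<max n 2. f k \<notin> U))"
      using n pw_disjoint_mono[of "max n 2" _ n] by fastforce
  qed simp
qed

lemma infdist_lessE:
  assumes "infdist x E < r" "E \<noteq> {}"
  shows "\<exists>a\<in>E. dist x a < r"
proof -
  have "(INF a\<in>E. dist x a) < r" using assms by (simp add: infdist_notempty)
  moreover have "bdd_below ((\<lambda>a. dist x a) ` E)" by (rule bdd_belowI[of _ 0]) auto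
  ultimately show ?thesis using assms(2) by (simp add: cINF_less_iff)
qed

theorem mainTheorem13:
  fixes \<tau> :: "'a::banach_lattice topology"
  assumes "linear_topology \<tau>" and "uniformly_exhaustive \<tau>" and "weaker_than_norm \<tau>"
  shows "(\<forall>E::'a set. subspace E \<and> closed E \<and> subtopology \<tau> E = top_of_set E
            \<longrightarrow> (\<exists>n\<ge>2. n_dispersed n E))
       \<and> (\<forall>T::'a \<Rightarrow> 'b::banach. bounded_linear T \<and> complements T \<tau>
            \<longrightarrow> (\<exists>n\<ge>2. n_DNS n T))"
proof (intro conjI allI impI)
  have top: "topspace \<tau> = UNIV" using assms(1) unfolding linear_topology_def by blast
  fix E :: "'a set"
  assume H: "subspace E \<and> closed E \<and> subtopology \<tau> E = top_of_set E"
  have E0: "0 \<in> E" using H subspace_0 by blast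
  have "openin (top_of_set E) (E \<inter> ball 0 (1/2))" by (rule openin_open_Int) simp
  hence "openin (subtopology \<tau> E) (E \<inter> ball 0 (1/2))" using H by simp
  then obtain V where V: "openin \<tau> V" "E \<inter> ball 0 (1/2) = V \<inter> E"
    by (auto simp: openin_subtopology)
  have "0 \<in> E \<inter> ball 0 (1/2)" using E0 by simp
  hence V0: "0 \<in> V" using V(2) by blast
  have cm: "continuous_map (prod_topology \<tau> \<tau>) \<tau> (\<lambda>(x, y). x + y)"
    using assms(1) unfolding linear_topology_def by blast
  have PO: "openin (prod_topology \<tau> \<tau>) {z \<in> topspace (prod_topology \<tau> \<tau>). (\<lambda>(x, y). x + y) z \<in> V}"
    using cm V(1) by (rule openin_continuous_map_preimage)
  have PM: "(0,0) \<in> {z \<in> topspace (prod_topology \<tau> \<tau>). (\<lambda>(x, y). x + y) z \<in> V}"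
    using V0 top by simp
  obtain W1 W2 where W: "openin \<tau> W1" "openin \<tau> W2" "0 \<in> W1" "0 \<in> W2"
    "W1 \<times> W2 \<subseteq> {z \<in> topspace (prod_topology \<tau> \<tau>). (\<lambda>(x, y). x + y) z \<in> V}"
    using openin_prod_topology_alt[THEN iffD1, OF PO, rule_format, OF PM] by blast
  define W where "W = W1 \<inter> W2"
  have Wo: "openin \<tau> W" unfolding W_def by (rule openin_Int[OF W(1,2)])
  have W0: "0 \<in> W" using W(3,4) unfolding W_def by blast
  have WV: "x + y \<in> V" if "x \<in> W" "y \<in> W" for x y
  proof -
    have "(x, y) \<in> W1 \<times> W2" using that unfolding W_def by blast
    hence "(x, y) \<in> {z \<in> topspace (prod_topology \<tau> \<tau>). (\<lambda>(x, y). x + y) z \<in> V}"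
      using W(5) by (rule subsetD[rotated])
    thus ?thesis by simp
  qed
  have "open W" using Wo assms(3) unfolding weaker_than_norm_def by blast
  then obtain \<rho> where rho: "\<rho> > 0" "ball 0 \<rho> \<subseteq> W" using W0 open_contains_ball by blast
  obtain n where n: "n \<ge> 2" "\<not> (\<exists>f. pw_disjoint n f \<and> (\<forall>k<n. f k \<notin> W))"
    using ue_get[OF assms(2) Wo W0] by blast
  define r where "r = min \<rho> (1/4)"
  have out: "f \<notin> W" if P: "norm f = 1" "infdist f E < r" for f
  proof
    assume fW: "f \<in> W"
    obtain e where e: "e \<in> E" "dist f e < r" using infdist_lessE[OF P(2)] E0 by blast
    have "norm (e - f) < \<rho>" using e(2) unfolding r_def by (simp add: dist_norm norm_minus_commute)
    hence "e - f \<in> ball 0 \<rho>" by simp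
    hence "e - f \<in> W" using rho(2) by blast
    hence "f + (e - f) \<in> V" using WV fW by blast
    hence "e \<in> V \<inter> E" using e(1) by simp
    hence "e \<in> E \<inter> ball 0 (1/2)" using V(2) by blast
    hence "norm e < 1/2" by simp
    moreover have "norm f \<le> norm e + dist f e"
      by (metis dist_norm norm_triangle_sub add.commute)
    ultimately show False using P e unfolding r_def by linarith
  qed
  have "r > 0" using rho unfolding r_def by simp
  have "n_dispersed n E"
    unfolding n_dispersed_def
  proof (intro exI[of _ r] conjI notI)
    assume "\<exists>f. pw_disjoint n f \<and> (\<forall>k<n. norm (f k) = 1 \<and> infdist (f k) E < r)"
    then obtain f where "pw_disjoint n f" "\<forall>k<n. norm (f k) = 1 \<and> infdist (f k) E < r" by blast
    thus False using n(2) out by blast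
  qed fact
  thus "\<exists>n\<ge>2. n_dispersed n E" using n(1) by blast
next
  have top: "topspace \<tau> = UNIV" using assms(1) unfolding linear_topology_def by blast
  fix T :: "'a \<Rightarrow> 'b"
  assume H: "bounded_linear T \<and> complements T \<tau>"
  have "\<exists>U r. openin \<tau> U \<and> 0 \<in> U \<and> r > 0 \<and>
          \<not> (\<exists>x. norm x = 1 \<and> x \<in> U \<and> norm (T x) \<le> r)"
  proof (rule ccontr)
    assume C: "\<not> ?thesis"
    define B where "B = {(U, r). openin \<tau> U \<and> 0 \<in> U \<and> (r::real) > 0}"
    define S where "S = (\<lambda>(U, r). {x. norm x = 1 \<and> x \<in> U \<and> norm (T x) \<le> r})"
    define F where "F = (INF b\<in>B. principal (S b))"
    have Sne: "S b \<noteq> {}" if "b \<in> B" for b using C that unfolding B_def S_def by auto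
    have UO: "openin \<tau> UNIV" using openin_topspace[of \<tau>] top by simp
    have "(UNIV, 1) \<in> B" using UO unfolding B_def by simp
    hence Bne: "B \<noteq> {}" by blast
    have ev: "eventually P F \<longleftrightarrow> (\<exists>b\<in>B. eventually P (principal (S b)))" for P
      unfolding F_def
    proof (rule eventually_INF_base[OF Bne])
      fix a b assume ab: "a \<in> B" "b \<in> B"
      obtain U1 r1 U2 r2 where a: "a = (U1, r1)" and b: "b = (U2, r2)" by (cases a, cases b)
      show "\<exists>x\<in>B. principal (S x) \<le> inf (principal (S a)) (principal (S b))"
        using ab unfolding a b
        by (intro bexI[of _ "(U1 \<inter> U2, min r1 r2)"]) (auto simp: B_def S_def)
    qed
    have Fnb: "F \<noteq> bot"
    proof
      assume "F = bot"
      hence "eventually (\<lambda>_. False) F" by simp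
      then obtain b where "b \<in> B" "eventually (\<lambda>_. False) (principal (S b))" using ev by blast
      thus False using Sne by (auto simp: eventually_principal)
    qed
    obtain x0 :: 'a where x0: "norm x0 = 1"
      using Sne Bne unfolding S_def by fastforce
    define f where "f = (\<lambda>p::'a. if norm p = 1 then p else x0)"
    have f1: "\<forall>p. norm (f p) = 1" unfolding f_def using x0 by auto
    have lim: "limitin \<tau> f 0 F"
      unfolding limitin_def
    proof (intro conjI allI impI)
      show "0 \<in> topspace \<tau>" using top by simp
      fix U assume U: "openin \<tau> U \<and> 0 \<in> U"
      have "(U, 1) \<in> B" using U unfolding B_def by simp
      moreover have "eventually (\<lambda>x. f x \<in> U) (principal (S (U, 1)))"
        unfolding S_def f_def by (auto simp: eventually_principal)
      ultimately show "eventually (\<lambda>x. f x \<in> U) F" using ev by blast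
    qed
    have tend: "((\<lambda>p. norm (T (f p))) \<longlongrightarrow> 0) F"
    proof (rule tendstoI)
      fix e :: real assume e: "e > 0"
      have "(UNIV, e/2) \<in> B" using UO e unfolding B_def by simp
      moreover have "eventually (\<lambda>x. dist (norm (T (f x))) 0 < e) (principal (S (UNIV, e/2)))"
        unfolding S_def f_def using e by (auto simp: eventually_principal)
      ultimately show "eventually (\<lambda>x. dist (norm (T (f x))) 0 < e) F" using ev by blast
    qed
    show False using H Fnb f1 lim tend unfolding complements_def by blast
  qed
  then obtain U r where U: "openin \<tau> U" "0 \<in> U" "r > 0"
    "\<not> (\<exists>x. norm x = 1 \<and> x \<in> U \<and> norm (T x) \<le> r)" by blast
  obtain n where n: "n \<ge> 2" "\<not> (\<exists>f. pw_disjoint n f \<and> (\<forall>k<n. f k \<notin> U))"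
    using ue_get[OF assms(2) U(1,2)] by blast
  have "n_DNS n T"
    unfolding n_DNS_def
  proof (intro exI[of _ r] conjI notI)
    assume "\<exists>f. pw_disjoint n f \<and> (\<forall>k<n. norm (f k) = 1 \<and> norm (T (f k)) \<le> r)"
    then obtain f where "pw_disjoint n f" "\<forall>k<n. norm (f k) = 1 \<and> norm (T (f k)) \<le> r" by blast
    thus False using n(2) U(4) by blast
  qed (rule U(3))
  thus "\<exists>n\<ge>2. n_DNS n T" using n(1) by blast
qed

end
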